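(* Let $\mathcal{H}\subseteq\{-1,+1\}^{\mathbb{R}^d}$, $\sigma>0$, $\varepsilon>0$, and let $(x_1,y_1),\dots,(x_T,y_T)\in\mathbb{R}^d\times\{-1,+1\}$. Define $\mathsf{OPT}^{\sigma,\varepsilon}_{\mathrm{gauss}}=\min_{h\in\mathcal{H}}\sum_{t=1}^T\mathbb{1}\!\left[y_t\,\mathbb{E}_{z\sim\mathcal{N}(0,I_d)}[h(x_t+\sigma z)]\le\varepsilon\right]$ and $\ddot{\mathsf{OPT}}^{\sigma}_{\mathrm{gauss}}=\min_{h\in\mathcal{H}}\sum_{t=1}^T\Pr_{z\sim\mathcal{N}(0,I_d)}[h(x_t+\sigma z)\neq y_t]$. Then $$\mathsf{OPT}^{\sigma,\varepsilon}_{\mathrm{gauss}}\le 2\cdot\ddot{\mathsf{OPT}}^{\sigma}_{\mathrm{gauss}}+T\varepsilon.$$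
   Context: Functions in $\mathcal{H}$ are assumed measurable so that the expectations and probabilities are defined, and the minima are assumed to be attained (or read as infima). *)

theory Defs
  imports "HOL-Probability.Probability"
begin

definition std_gauss :: "('a::euclidean_space) measure" where
  "std_gauss = density lborel
     (\<lambda>z. ennreal ((2 * pi) powr (- real DIM('a) / 2) * exp (- (norm z)\<^sup>2 / 2)))"

definition opt_gauss ::
  "('a::euclidean_space \<Rightarrow> real) set \<Rightarrow> real \<Rightarrow> real \<Rightarrow> nat \<Rightarrow> (nat \<Rightarrow> 'a) \<Rightarrow> (nat \<Rightarrow> real) \<Rightarrow> real" where
  "opt_gauss H \<sigma> \<epsilon> T x y =
     (INF h\<in>H. (\<Sum>t=1..T.
        (if y t * (\<integral>z. h (x t + \<sigma> *\<^sub>R z) \<partial>std_gauss) \<le> \<epsilon> then 1 else 0)))"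

definition opt_gauss_dd ::
  "('a::euclidean_space \<Rightarrow> real) set \<Rightarrow> real \<Rightarrow> nat \<Rightarrow> (nat \<Rightarrow> 'a) \<Rightarrow> (nat \<Rightarrow> real) \<Rightarrow> real" where
  "opt_gauss_dd H \<sigma> T x y =
     (INF h\<in>H. (\<Sum>t=1..T. measure std_gauss {z \<in> space std_gauss. h (x t + \<sigma> *\<^sub>R z) \<noteq> y t}))"

end

theory Submission
  imports Defs
begin

lemma std_gauss_prob: "prob_space (std_gauss :: ('a::euclidean_space) measure)"
proof
  have nn1: "(\<integral>\<^sup>+x. ennreal (std_normal_density x) \<partial>lborel) = 1"
  proof -
    interpret P: prob_space "density lborel (\<lambda>x. ennreal (std_normal_density x))"
      by (rule prob_space_normal_density) simp
    have "emeasure (density lborel (\<lambda>x. ennreal (std_normal_density x))) UNIV = 1"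
      using P.emeasure_space_1 by simp
    then show ?thesis by (simp add: emeasure_density)
  qed
  have eq: "\<And>z::'a. ennreal ((2 * pi) powr (- real DIM('a) / 2) * exp (- (norm z)\<^sup>2 / 2))
      = (\<Prod>b\<in>Basis. ennreal (std_normal_density (z \<bullet> b)))"
  proof -
    fix z :: 'a
    have "(\<Prod>b\<in>Basis. std_normal_density (z \<bullet> b))
       = (\<Prod>b\<in>(Basis::'a set). (1 / sqrt (2 * pi)) * exp (- (z \<bullet> b)\<^sup>2 / 2))"
      by (simp add: std_normal_density_def)
    also have "\<dots> = (1 / sqrt (2 * pi)) ^ DIM('a) * exp (\<Sum>b\<in>(Basis::'a set). - (z \<bullet> b)\<^sup>2 / 2)"
      by (simp only: prod.distrib exp_sum prod_constant finite_Basis)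
    also have "(\<Sum>b\<in>(Basis::'a set). - (z \<bullet> b)\<^sup>2 / 2) = - (norm z)\<^sup>2 / 2"
    proof -
      have "(norm z)\<^sup>2 = (\<Sum>b\<in>(Basis::'a set). (z \<bullet> b)\<^sup>2)"
        unfolding power2_norm_eq_inner by (subst euclidean_inner) (simp add: power2_eq_square)
      then show ?thesis by (simp add: sum_negf sum_divide_distrib[symmetric])
    qed
    also have "(1 / sqrt (2 * pi)) ^ DIM('a) = (2 * pi) powr (- real DIM('a) / 2)"
    proof -
      have "(1 / sqrt (2 * pi)) = (2 * pi) powr (- 1 / 2)"
        by (simp add: powr_minus_divide powr_half_sqrt)
      then have "(1 / sqrt (2 * pi)) ^ DIM('a) = ((2 * pi) powr (- 1 / 2)) powr real DIM('a)"
        by (simp add: powr_realpow)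
      also have "\<dots> = (2 * pi) powr (- real DIM('a) / 2)"
        by (simp add: powr_powr)
      finally show ?thesis .
    qed
    finally show "?thesis z"
      by (simp add: prod_ennreal)
  qed
  show "emeasure (std_gauss::'a measure) (space std_gauss) = 1"
    unfolding std_gauss_def
    apply (simp only: eq)
    apply (subst emeasure_density)
      apply simp
     apply simp
    apply (simp only: space_density space_lborel space_borel indicator_simps UNIV_I if_True mult_1_right)
    apply (subst nn_integral_lborel_prod)
    apply (auto simp: nn1)
    done
qed

lemma sets_std_gauss[simp]: "sets std_gauss = sets borel"
  unfolding std_gauss_def by simp

lemma key:
  fixes h :: "'a::euclidean_space \<Rightarrow> real" and c :: 'a and s :: real and yy :: real
  assumes hm: "h \<in> borel_measurable borel" and hv: "\<forall>u. h u \<in> {-1, 1}" and yv: "yy \<in> {-1, 1}"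
  shows "yy * (\<integral>z. h (c + s *\<^sub>R z) \<partial>std_gauss)
       = 1 - 2 * measure std_gauss {z \<in> space std_gauss. h (c + s *\<^sub>R z) \<noteq> yy}"
proof -
  interpret P: prob_space "std_gauss :: 'a measure" by (rule std_gauss_prob)
  let ?A = "{z \<in> space std_gauss. h (c + s *\<^sub>R z) \<noteq> yy}"
  have fm: "(\<lambda>z. h (c + s *\<^sub>R z)) \<in> borel_measurable std_gauss"
    using hm by (simp add: measurable_cong_sets[OF sets_std_gauss refl])
  have Am: "?A \<in> sets std_gauss"
    using fm by measurable
  have pt: "\<And>z. yy * h (c + s *\<^sub>R z) = 1 - 2 * indicator ?A z"
    using hv yv by (auto simp: indicator_def space_density std_gauss_def)
  have "yy * (\<integral>z. h (c + s *\<^sub>R z) \<partial>std_gauss) = (\<integral>z. yy * h (c + s *\<^sub>R z) \<partial>std_gauss)"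
    by simp
  also have "\<dots> = (\<integral>z. 1 - 2 * indicator ?A z \<partial>std_gauss)"
    by (simp only: pt)
  also have "\<dots> = 1 - 2 * measure std_gauss ?A"
  proof -
    have ii: "integrable std_gauss (indicat_real ?A)"
      using Am by (intro integrable_real_indicator) (auto simp: P.emeasure_finite less_top[symmetric])
    show ?thesis
      using Am ii by (subst Bochner_Integration.integral_diff) (auto simp: P.prob_space)
  qed
  finally show ?thesis .
qed

theorem claim22:
  fixes H :: "('a::euclidean_space \<Rightarrow> real) set"
    and \<sigma> \<epsilon> :: real and T :: nat and x :: "nat \<Rightarrow> 'a" and y :: "nat \<Rightarrow> real"
  assumes "H \<noteq> {}"
    and "\<forall>h\<in>H. \<forall>u. h u \<in> {-1, 1}"
    and "\<forall>h\<in>H. h \<in> borel_measurable borel"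
    and "\<sigma> > 0" and "\<epsilon> > 0"
    and "\<forall>t\<in>{1..T}. y t \<in> {-1, 1}"
  shows "opt_gauss H \<sigma> \<epsilon> T x y \<le> 2 * opt_gauss_dd H \<sigma> T x y + real T * \<epsilon>"
proof -
  define cnt where "cnt h = (\<Sum>t=1..T.
        (if y t * (\<integral>z. h (x t + \<sigma> *\<^sub>R z) \<partial>std_gauss) \<le> \<epsilon> then 1 else 0::real))" for h :: "'a \<Rightarrow> real"
  define dd where "dd h = (\<Sum>t=1..T. measure std_gauss {z \<in> space std_gauss. h (x t + \<sigma> *\<^sub>R z) \<noteq> y t})" for h :: "'a \<Rightarrow> real"
  have o1: "opt_gauss H \<sigma> \<epsilon> T x y = (INF h\<in>H. cnt h)"
    unfolding opt_gauss_def cnt_def by simp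
  have o2: "opt_gauss_dd H \<sigma> T x y = (INF h\<in>H. dd h)"
    unfolding opt_gauss_dd_def dd_def by simp
  have bnd: "cnt h \<le> 2 * dd h + real T * \<epsilon>" if hH: "h \<in> H" for h
  proof -
    have "cnt h \<le> (\<Sum>t=1..T. 2 * measure std_gauss {z \<in> space std_gauss. h (x t + \<sigma> *\<^sub>R z) \<noteq> y t} + \<epsilon>)"
      unfolding cnt_def
    proof (rule sum_mono)
      fix t assume t: "t \<in> {1..T}"
      have k: "y t * (\<integral>z. h (x t + \<sigma> *\<^sub>R z) \<partial>std_gauss)
        = 1 - 2 * measure std_gauss {z \<in> space std_gauss. h (x t + \<sigma> *\<^sub>R z) \<noteq> y t}"
        using assms hH t by (intro key) auto
      show "(if y t * (\<integral>z. h (x t + \<sigma> *\<^sub>R z) \<partial>std_gauss) \<le> \<epsilon> then 1 else 0)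
         \<le> 2 * measure std_gauss {z \<in> space std_gauss. h (x t + \<sigma> *\<^sub>R z) \<noteq> y t} + \<epsilon>"
        unfolding k using assms(5) measure_nonneg[of std_gauss "{z \<in> space std_gauss. h (x t + \<sigma> *\<^sub>R z) \<noteq> y t}"]
        by auto
    qed
    also have "\<dots> = 2 * dd h + real T * \<epsilon>"
      unfolding dd_def by (simp add: sum.distrib sum_distrib_left)
    finally show ?thesis .
  qed
  have bdd1: "bdd_below (cnt ` H)"
    by (rule bdd_belowI[where m=0]) (auto simp: cnt_def intro!: sum_nonneg)
  have "(INF h\<in>H. cnt h) - real T * \<epsilon> \<le> 2 * (INF h\<in>H. dd h)"
  proof -
    have "((INF h\<in>H. cnt h) - real T * \<epsilon>) / 2 \<le> (INF h\<in>H. dd h)"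
    proof (rule cINF_greatest[OF assms(1)])
      fix h assume hH: "h \<in> H"
      have "(INF h\<in>H. cnt h) \<le> cnt h" by (rule cINF_lower[OF bdd1 hH])
      then show "((INF h\<in>H. cnt h) - real T * \<epsilon>) / 2 \<le> dd h" using bnd[OF hH] by simp
    qed
    then show ?thesis by simp
  qed
  then show ?thesis unfolding o1 o2 by simp
qed

end
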